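(* Let $\tau$ be a primitive substitution with fixed point $X_\tau$. Then for any two non-empty prefixes $u,v$ of $X_\tau$, the return substitutions $\tau_u$ and $\tau_v$ have the same non-zero eigenvalues.
   Context: A substitution is a triple $(\tau,A,a)$: $A$ a finite alphabet, $\tau:A\to A^+$ a morphism (extended by concatenation), $a\in A$ with $\tau(a)$ starting with $a$; its fixed point $X_\tau$ is the unique sequence starting with $a$ with $\tau(X_\tau)=X_\tau$. Its matrix $M_\tau$ has $(i,j)$ entry the number of occurrences of $i$ in $\tau(j)$; eigenvalues of a substitution (or morphism $B\to B^+$) mean eigenvalues of its matrix. $\tau$ is primitive if some power of $M_\tau$ is positive; then $X_\tau$ is uniformly recurrent. For a non-empty prefix $u$ of $X_\tau$, a return word on $u$ is a factor $X_{[i,j-1]}$ where $i<j$ are successive occurrences of $u$; there are finitely many, and $X_\tau$ factors uniquely as a concatenation $m_0m_1\cdots$ of return words. Enumerating return words in order of first appearance gives a bijection $\Theta_u$ from $R_u=\{1,\dots,N\}$ to the return words, extended to an injective morphism $R_u^*\to A^*$. The return substitution on $u$ is the unique morphism $\tau_u:R_u\to R_u^+$ with $\Theta_u\tau_u=\tau\Theta_u$. *)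

theory Defs
  imports Complex_Main
begin

definition substitution :: "'a set \<Rightarrow> ('a \<Rightarrow> 'a list) \<Rightarrow> 'a \<Rightarrow> bool" where
  "substitution A \<tau> a \<longleftrightarrow> finite A \<and> a \<in> A \<and>
     (\<forall>b\<in>A. \<tau> b \<noteq> [] \<and> set (\<tau> b) \<subseteq> A) \<and> hd (\<tau> a) = a"

definition subst_matrix :: "('b \<Rightarrow> 'b list) \<Rightarrow> 'b \<Rightarrow> 'b \<Rightarrow> nat" where
  "subst_matrix \<sigma> i j = count_list (\<sigma> j) i"

definition mat_mult_on :: "'b set \<Rightarrow> ('b \<Rightarrow> 'b \<Rightarrow> nat) \<Rightarrow> ('b \<Rightarrow> 'b \<Rightarrow> nat) \<Rightarrow> 'b \<Rightarrow> 'b \<Rightarrow> nat" where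
  "mat_mult_on B M N i j = (\<Sum>k\<in>B. M i k * N k j)"

fun mat_pow_on :: "'b set \<Rightarrow> ('b \<Rightarrow> 'b \<Rightarrow> nat) \<Rightarrow> nat \<Rightarrow> 'b \<Rightarrow> 'b \<Rightarrow> nat" where
  "mat_pow_on B M 0 = (\<lambda>i j. if i = j then 1 else 0)"
| "mat_pow_on B M (Suc n) = mat_mult_on B (mat_pow_on B M n) M"

definition primitive :: "'a set \<Rightarrow> ('a \<Rightarrow> 'a list) \<Rightarrow> bool" where
  "primitive A \<tau> \<longleftrightarrow> (\<exists>n>0. \<forall>i\<in>A. \<forall>j\<in>A. mat_pow_on A (subst_matrix \<tau>) n i j > 0)"

definition mat_eigenvalue_on :: "'b set \<Rightarrow> ('b \<Rightarrow> 'b \<Rightarrow> nat) \<Rightarrow> complex \<Rightarrow> bool" where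
  "mat_eigenvalue_on B M \<mu> \<longleftrightarrow>
     (\<exists>v :: 'b \<Rightarrow> complex. (\<exists>i\<in>B. v i \<noteq> 0) \<and>
        (\<forall>i\<in>B. (\<Sum>j\<in>B. of_nat (M i j) * v j) = \<mu> * v i))"

definition subst_eigenvalue :: "'b set \<Rightarrow> ('b \<Rightarrow> 'b list) \<Rightarrow> complex \<Rightarrow> bool" where
  "subst_eigenvalue B \<sigma> \<mu> \<longleftrightarrow> mat_eigenvalue_on B (subst_matrix \<sigma>) \<mu>"

definition subst_word :: "('a \<Rightarrow> 'a list) \<Rightarrow> 'a list \<Rightarrow> 'a list" where
  "subst_word \<tau> w = concat (map \<tau> w)"

text \<open>X (an infinite word over A) is the fixed point of (tau, A, a): it starts with a and
  tau(X) = X, i.e. for every n, tau(X_0 ... X_{n-1}) is a prefix of X.\<close>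
definition is_fixed_point :: "'a set \<Rightarrow> ('a \<Rightarrow> 'a list) \<Rightarrow> 'a \<Rightarrow> (nat \<Rightarrow> 'a) \<Rightarrow> bool" where
  "is_fixed_point A \<tau> a X \<longleftrightarrow> X 0 = a \<and> (\<forall>i. X i \<in> A) \<and>
     (\<forall>n i. i < length (subst_word \<tau> (map X [0..<n])) \<longrightarrow>
              subst_word \<tau> (map X [0..<n]) ! i = X i)"

definition is_prefix_of :: "'a list \<Rightarrow> (nat \<Rightarrow> 'a) \<Rightarrow> bool" where
  "is_prefix_of u X \<longleftrightarrow> u = map X [0..<length u]"

definition occurs_at :: "(nat \<Rightarrow> 'a) \<Rightarrow> 'a list \<Rightarrow> nat \<Rightarrow> bool" where
  "occurs_at X u i \<longleftrightarrow> (\<forall>j<length u. X (i + j) = u ! j)"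

definition successive_occ :: "(nat \<Rightarrow> 'a) \<Rightarrow> 'a list \<Rightarrow> nat \<Rightarrow> nat \<Rightarrow> bool" where
  "successive_occ X u i j \<longleftrightarrow> i < j \<and> occurs_at X u i \<and> occurs_at X u j \<and>
     (\<forall>l. i < l \<and> l < j \<longrightarrow> \<not> occurs_at X u l)"

definition return_word :: "(nat \<Rightarrow> 'a) \<Rightarrow> 'a list \<Rightarrow> 'a list \<Rightarrow> bool" where
  "return_word X u w \<longleftrightarrow> (\<exists>i j. successive_occ X u i j \<and> w = map X [i..<j])"

definition first_return_pos :: "(nat \<Rightarrow> 'a) \<Rightarrow> 'a list \<Rightarrow> 'a list \<Rightarrow> nat" where
  "first_return_pos X u w = (LEAST i. \<exists>j. successive_occ X u i j \<and> w = map X [i..<j])"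

definition return_enum :: "(nat \<Rightarrow> 'a) \<Rightarrow> 'a list \<Rightarrow> nat \<Rightarrow> (nat \<Rightarrow> 'a list) \<Rightarrow> bool" where
  "return_enum X u N \<Theta> \<longleftrightarrow> bij_betw \<Theta> {1..N} {w. return_word X u w} \<and>
     strict_mono_on {1..N} (\<lambda>i. first_return_pos X u (\<Theta> i))"

definition return_subst ::
  "('a \<Rightarrow> 'a list) \<Rightarrow> (nat \<Rightarrow> 'a) \<Rightarrow> 'a list \<Rightarrow> nat \<Rightarrow> (nat \<Rightarrow> 'a list) \<Rightarrow> (nat \<Rightarrow> nat list) \<Rightarrow> bool" where
  "return_subst \<tau> X u N \<Theta> \<sigma> \<longleftrightarrow> return_enum X u N \<Theta> \<and>
     (\<forall>i\<in>{1..N}. \<sigma> i \<noteq> [] \<and> set (\<sigma> i) \<subseteq> {1..N} \<and>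
        concat (map \<Theta> (\<sigma> i)) = subst_word \<tau> (\<Theta> i))"

end

theory Submission
  imports Defs
begin


definition swd :: "('b \<Rightarrow> 'c list) \<Rightarrow> 'b list \<Rightarrow> 'c list" where
  "swd f xs = concat (map f xs)"

abbreviation swpw :: "('a \<Rightarrow> 'a list) \<Rightarrow> nat \<Rightarrow> 'a list \<Rightarrow> 'a list" where
  "swpw f n \<equiv> swd f ^^ n"

lemma subst_word_eq: "subst_word = swd"
  by (intro ext) (simp add: subst_word_def swd_def)

lemma sw_Nil[simp]: "swd f [] = []" by (simp add: swd_def)
lemma sw_Cons[simp]: "swd f (x#xs) = f x @ swd f xs" by (simp add: swd_def)
lemma sw_append[simp]: "swd f (xs@ys) = swd f xs @ swd f ys" by (simp add: swd_def)

lemma sw_comp: "swd g (swd f xs) = swd (\<lambda>j. swd g (f j)) xs"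
  by (induction xs) auto

lemma sw_cong: "(\<And>x. x \<in> set xs \<Longrightarrow> f x = g x) \<Longrightarrow> swd f xs = swd g xs"
  by (induction xs) auto

lemma sw_id: "swd (\<lambda>k. [k]) xs = xs"
  by (induction xs) auto

lemma swpow_append: "(swpw f n) (xs@ys) = (swpw f n) xs @ (swpw f n) ys"
  by (induction n) auto

lemma swpow_Nil[simp]: "(swpw f n) [] = []"
  by (induction n) auto

lemma swpow_sw: "(swpw f n) (swd g xs) = swd (\<lambda>k. (swpw f n) (g k)) xs"
  by (induction xs) (auto simp: swpow_append)

lemma swpow_concat: "(swpw f n) xs = swd (\<lambda>k. (swpw f n) [k]) xs"
  using swpow_sw[where f=f and n=n and g="\<lambda>k. [k]" and xs=xs] by (simp add: sw_id)

lemma sw_set: "(\<And>b. b \<in> B \<Longrightarrow> set (f b) \<subseteq> B) \<Longrightarrow> set xs \<subseteq> B \<Longrightarrow> set (swd f xs) \<subseteq> B"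
  by (induction xs) auto

lemma swpow_set: "(\<And>b. b \<in> B \<Longrightarrow> set (f b) \<subseteq> B) \<Longrightarrow> set xs \<subseteq> B \<Longrightarrow> set ((swpw f n) xs) \<subseteq> B"
proof (induction n)
  case 0 then show ?case by simp
next
  case (Suc n) then show ?case using sw_set[of B f] by simp
qed

lemma sw_len: "(\<And>b. b \<in> B \<Longrightarrow> f b \<noteq> []) \<Longrightarrow> set xs \<subseteq> B \<Longrightarrow> length xs \<le> length (swd f xs)"
proof (induction xs)
  case Nil then show ?case by simp
next
  case (Cons x xs)
  then have "f x \<noteq> []" by simp
  then have "1 \<le> length (f x)" by (cases "f x") auto
  with Cons show ?case by simp
qed

lemma swpow_len: "(\<And>b. b \<in> B \<Longrightarrow> f b \<noteq> []) \<Longrightarrow> (\<And>b. b \<in> B \<Longrightarrow> set (f b) \<subseteq> B) \<Longrightarrow> set xs \<subseteq> B \<Longrightarrow> length xs \<le> length ((swpw f n) xs)"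
proof (induction n)
  case 0 then show ?case by simp
next
  case (Suc n)
  have "set ((swpw f n) xs) \<subseteq> B" using swpow_set[of B f] Suc.prems by blast
  then have "length ((swpw f n) xs) \<le> length (swd f ((swpw f n) xs))"
    using sw_len[of B f] Suc.prems by blast
  with Suc show ?case by simp
qed

lemma count_sw: "finite C \<Longrightarrow> set xs \<subseteq> C \<Longrightarrow>
  count_list (swd g xs) i = (\<Sum>k\<in>C. count_list xs k * count_list (g k) i)"
proof (induction xs)
  case Nil then show ?case by simp
next
  case (Cons x xs)
  have "(\<Sum>k\<in>C. count_list (x#xs) k * count_list (g k) i) =
    (\<Sum>k\<in>C. count_list xs k * count_list (g k) i) + (\<Sum>k\<in>C. if x = k then count_list (g k) i else 0)"
    by (auto simp add: sum.distrib[symmetric] intro!: sum.cong)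
  also have "(\<Sum>k\<in>C. if x = k then count_list (g k) i else 0) = count_list (g x) i"
    using Cons.prems by (simp add: sum.delta)
  finally show ?case using Cons by simp
qed

lemma matpow_count:
  assumes "finite A" "\<And>b. b \<in> A \<Longrightarrow> set (\<tau> b) \<subseteq> A"
  shows "i \<in> A \<Longrightarrow> j \<in> A \<Longrightarrow> mat_pow_on A (subst_matrix \<tau>) n i j = count_list ((swpw \<tau> n) [j]) i"
proof (induction n arbitrary: i j)
  case 0 then show ?case by simp
next
  case (Suc n)
  have "mat_pow_on A (subst_matrix \<tau>) (Suc n) i j = (\<Sum>k\<in>A. count_list ((swpw \<tau> n) [k]) i * count_list (\<tau> j) k)"
    unfolding mat_pow_on.simps mat_mult_on_def by (intro sum.cong refl) (simp add: Suc.IH Suc.prems subst_matrix_def)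
  also have "\<dots> = count_list ((swpw \<tau> n) (\<tau> j)) i"
    using count_sw[of A "\<tau> j" "\<lambda>k. (swpw \<tau> n) [k]" i] assms Suc.prems swpow_concat[where f=\<tau> and n=n and xs="\<tau> j"]
    by (simp add: mult.commute)
  also have "\<dots> = count_list ((swpw \<tau> (Suc n)) [j]) i"
    by (simp only: funpow_Suc_right o_apply) simp
  finally show ?case .
qed



lemma fp1:
  assumes "is_fixed_point A \<tau> a X"
  shows "swd \<tau> (map X [0..<m]) = map X [0..<length (swd \<tau> (map X [0..<m]))]"
proof (rule nth_equalityI)
  fix i assume "i < length (swd \<tau> (map X [0..<m]))"
  then show "swd \<tau> (map X [0..<m]) ! i = map X [0..<length (swd \<tau> (map X [0..<m]))] ! i"
    using assms unfolding is_fixed_point_def subst_word_eq by simp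
qed simp

lemma fp_prefix:
  assumes "is_fixed_point A \<tau> a X"
  shows "\<exists>L. (swpw \<tau> n) (map X [0..<m]) = map X [0..<L]"
proof (induction n)
  case 0 then show ?case by auto
next
  case (Suc n)
  then obtain L where L: "(swpw \<tau> n) (map X [0..<m]) = map X [0..<L]" by blast
  have "(swpw \<tau> (Suc n)) (map X [0..<m]) = swd \<tau> (map X [0..<L])" using L by simp
  then show ?case using fp1[OF assms, of L] by metis
qed

lemma map_upt_split: "p \<le> m \<Longrightarrow> m \<le> q \<Longrightarrow> map X [p..<m] @ map X [m..<q] = map X [p..<q]"
  by (metis le_add_diff_inverse map_append upt_add_eq_append)

lemma growth:
  assumes sub: "substitution A \<tau> a" and prim: "primitive A \<tau>" and fp: "is_fixed_point A \<tau> a X"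
    and b: "b \<in> A" "b \<noteq> a"
  shows "\<exists>n. L \<le> length ((swpw \<tau> n) [a])"
proof -
  have fin: "finite A" and aA: "a \<in> A" and ne: "\<And>c. c \<in> A \<Longrightarrow> \<tau> c \<noteq> []"
    and st: "\<And>c. c \<in> A \<Longrightarrow> set (\<tau> c) \<subseteq> A"
    using sub by (auto simp: substitution_def)
  have X0: "X 0 = a" and XA: "\<And>i. X i \<in> A" using fp by (auto simp: is_fixed_point_def subst_word_eq)
  have a1: "[a] = map X [0..<1]" using X0 by simp
  obtain n where n: "n > 0" "\<forall>i\<in>A. \<forall>j\<in>A. mat_pow_on A (subst_matrix \<tau>) n i j > 0"
    using prim by (auto simp: primitive_def)
  have "mat_pow_on A (subst_matrix \<tau>) n b a > 0" using n(2) b aA by blast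
  moreover have "mat_pow_on A (subst_matrix \<tau>) n b a = count_list ((swpw \<tau> n) [a]) b"
    by (rule matpow_count[OF fin st b(1) aA])
  ultimately have "count_list ((swpw \<tau> n) [a]) b \<noteq> 0" by simp
  then have bin: "b \<in> set ((swpw \<tau> n) [a])"
    by (simp add: count_list_0_iff)
  obtain L0 where L0: "(swpw \<tau> n) [a] = map X [0..<L0]"
    using fp_prefix[OF fp, of n 1] by (auto simp add: X0)
  from bin L0 obtain i where i: "i < L0" "X i = b" by auto
  have "i \<noteq> 0" proof assume "i = 0" then show False using i(2) b(2) X0 by simp qed
  with i have L02: "2 \<le> L0" by linarith
  have XsA: "set (map X [p..<q]) \<subseteq> A" for p q using XA by auto
  have main: "k + 1 \<le> length ((swpw \<tau> (n*k)) [a])" for k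
  proof (induction k)
    case 0 then show ?case by simp
  next
    case (Suc k)
    obtain L' where L': "(swpw \<tau> (n*k)) [a] = map X [0..<L']"
      using fp_prefix[OF fp, of "n*k" 1] by (auto simp add: X0)
    with Suc.IH have "k + 1 \<le> L'" by simp
    have sp: "map X [0..<L'] = [a] @ map X [1..<L']"
      using map_upt_split[of 0 1 L' X] \<open>k+1 \<le> L'\<close> a1 by simp
    have "(swpw \<tau> (n * Suc k)) [a] = (swpw \<tau> n) ((swpw \<tau> (n*k)) [a])"
      by (simp add: funpow_add)
    also have "\<dots> = (swpw \<tau> n) [a] @ (swpw \<tau> n) (map X [1..<L'])"
      by (simp only: L' sp swpow_append)
    finally have "length ((swpw \<tau> (n * Suc k)) [a]) = L0 + length ((swpw \<tau> n) (map X [1..<L']))"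
      using L0 by simp
    moreover have "length (map X [1..<L']) \<le> length ((swpw \<tau> n) (map X [1..<L']))"
      using swpow_len[of A \<tau>, OF ne st XsA] by blast
    moreover have "length (map X [1..<L']) = L' - 1" by simp
    ultimately show ?case using L02 \<open>k+1 \<le> L'\<close> by linarith
  qed
  show ?thesis using main[of L] by (intro exI[of _ "n*L"]) simp
qed

lemma prefix_eq: "is_prefix_of u X \<Longrightarrow> t < length u \<Longrightarrow> u ! t = X t"
  unfolding is_prefix_of_def by (metis add_0 diff_zero length_map length_upt nth_map_upt)

lemma occ_eq: "occurs_at X u i \<Longrightarrow> map X [i..<i + length u] = u"
  by (rule nth_equalityI) (auto simp: occurs_at_def)

lemma occ_transfer:
  assumes sub: "substitution A \<tau> a" and prim: "primitive A \<tau>" and fp: "is_fixed_point A \<tau> a X"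
    and u: "u \<noteq> []" "is_prefix_of u X" and v: "v \<noteq> []" "is_prefix_of v X"
  shows "\<exists>n. \<forall>i. occurs_at X v i \<longrightarrow> occurs_at X u (length ((swpw \<tau> n) (map X [0..<i])))"
proof (cases "\<exists>b\<in>A. b \<noteq> a")
  case False
  have XA: "\<And>i. X i \<in> A" using fp by (auto simp: is_fixed_point_def subst_word_eq)
  with False have Xa: "\<And>i. X i = a" by blast
  have "occurs_at X u p" for p
    unfolding occurs_at_def using prefix_eq[OF u(2)] Xa by simp
  then show ?thesis by blast
next
  case True
  then obtain b where b: "b \<in> A" "b \<noteq> a" by blast
  have fin: "finite A" and aA: "a \<in> A" and ne: "\<And>c. c \<in> A \<Longrightarrow> \<tau> c \<noteq> []"
    and st: "\<And>c. c \<in> A \<Longrightarrow> set (\<tau> c) \<subseteq> A"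
    using sub by (auto simp: substitution_def)
  have X0: "X 0 = a" and XA: "\<And>i. X i \<in> A" using fp by (auto simp: is_fixed_point_def subst_word_eq)
  have XsA: "set (map X [p..<q]) \<subseteq> A" for p q using XA by auto
  obtain n where n: "length u \<le> length ((swpw \<tau> n) [a])"
    using growth[OF sub prim fp b] by blast
  have vX: "v = map X [0..<length v]" using v(2) by (simp add: is_prefix_of_def)
  have v1: "v = [a] @ map X [1..<length v]"
    using map_upt_split[of 0 1 "length v" X] v(1) X0 vX by (cases v) auto
  have lenv: "length u \<le> length ((swpw \<tau> n) v)"
  proof -
    have "(swpw \<tau> n) v = (swpw \<tau> n) [a] @ (swpw \<tau> n) (map X [1..<length v])"
      by (subst v1) (rule swpow_append)
    then show ?thesis using n by simp
  qed
  obtain R where R: "(swpw \<tau> n) v = map X [0..<R]"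
    using fp_prefix[OF fp, of n "length v"] vX by auto
  have "occurs_at X u (length ((swpw \<tau> n) (map X [0..<i])))" if oc: "occurs_at X v i" for i
  proof -
    define P where "P = length ((swpw \<tau> n) (map X [0..<i]))"
    have "map X [0..<i + length v] = map X [0..<i] @ v"
      using map_upt_split[of 0 i "i + length v" X] occ_eq[OF oc] by simp
    then have e: "(swpw \<tau> n) (map X [0..<i + length v]) = (swpw \<tau> n) (map X [0..<i]) @ map X [0..<R]"
      by (simp only: swpow_append R)
    obtain Q where Q: "(swpw \<tau> n) (map X [0..<i + length v]) = map X [0..<Q]"
      using fp_prefix[OF fp] by blast
    have RQ: "Q = P + R" using arg_cong[OF e, of length] Q P_def by simp
    have "u ! t = X (P + t)" if t: "t < length u" for t
    proof -
      have tR: "t < R" using lenv R t by simp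
      have "X (P + t) = map X [0..<Q] ! (P + t)" using RQ tR by simp
      also have "\<dots> = ((swpw \<tau> n) (map X [0..<i]) @ map X [0..<R]) ! (P + t)" using e Q by simp
      also have "\<dots> = X t" using tR by (simp add: P_def nth_append)
      finally show ?thesis using prefix_eq[OF u(2) t] by simp
    qed
    then show ?thesis unfolding occurs_at_def P_def by simp
  qed
  then show ?thesis by blast
qed



lemma enum_ret: "return_enum X u N \<Theta> \<Longrightarrow> z \<in> {1..N} \<Longrightarrow> \<exists>i j. successive_occ X u i j \<and> \<Theta> z = map X [i..<j]"
  unfolding return_enum_def return_word_def using bij_betwE by fastforce

lemma enum_surj: "return_enum X u N \<Theta> \<Longrightarrow> return_word X u w \<Longrightarrow> \<exists>z\<in>{1..N}. \<Theta> z = w"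
proof -
  assume "return_enum X u N \<Theta>" "return_word X u w"
  then have "w \<in> \<Theta> ` {1..N}" unfolding return_enum_def bij_betw_def by auto
  then show ?thesis by auto
qed

lemma decomp:
  assumes en: "return_enum X u N \<Theta>"
  shows "p \<le> q \<Longrightarrow> occurs_at X u p \<Longrightarrow> occurs_at X u q \<Longrightarrow>
    \<exists>xs. set xs \<subseteq> {1..N} \<and> swd \<Theta> xs = map X [p..<q]"
proof (induction "q - p" arbitrary: p rule: less_induct)
  case less
  show ?case
  proof (cases "p = q")
    case True then show ?thesis by (intro exI[of _ "[]"]) simp
  next
    case False
    with less.prems have pq: "p < q" by simp
    define m where "m = (LEAST l. p < l \<and> occurs_at X u l)"
    have ex: "p < q \<and> occurs_at X u q" using pq less.prems by simp
    have m1: "p < m \<and> occurs_at X u m" unfolding m_def by (rule LeastI[of _ q]) (rule ex)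
    have m2: "m \<le> q" unfolding m_def by (rule Least_le) (rule ex)
    have m3: "\<not> occurs_at X u l" if "p < l" "l < m" for l
      using not_less_Least[of l "\<lambda>l. p < l \<and> occurs_at X u l"] that unfolding m_def by blast
    have "successive_occ X u p m" unfolding successive_occ_def using m1 m3 less.prems by blast
    then have "return_word X u (map X [p..<m])" unfolding return_word_def by blast
    then obtain z where z: "z \<in> {1..N}" "\<Theta> z = map X [p..<m]" using enum_surj[OF en] by blast
    have "q - m < q - p" using m1 m2 pq by linarith
    then obtain xs where xs: "set xs \<subseteq> {1..N}" "swd \<Theta> xs = map X [m..<q]"
      using less.hyps[of m] m1 m2 less.prems(3) by blast
    show ?thesis
      using z xs map_upt_split[of p m q X] m1 m2 by (intro exI[of _ "z # xs"]) simp
  qed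
qed

lemma ret_nonempty: "return_word X u w \<Longrightarrow> w \<noteq> []"
  unfolding return_word_def successive_occ_def by auto

lemma ret_starts: "return_word X u w \<Longrightarrow> \<exists>r. w @ u = u @ r"
proof -
  assume "return_word X u w"
  then obtain i j where ij: "successive_occ X u i j" "w = map X [i..<j]" unfolding return_word_def by blast
  then have oc: "occurs_at X u i" "occurs_at X u j" "i < j" unfolding successive_occ_def by auto
  have "w @ u = map X [i..<j + length u]"
    using ij(2) occ_eq[OF oc(2)] map_upt_split[of i j "j + length u" X] oc(3) by simp
  also have "\<dots> = map X [i..<i + length u] @ map X [i + length u..<j + length u]"
    using map_upt_split[of i "i + length u" "j + length u" X] oc(3) by simp
  also have "\<dots> = u @ map X [i + length u..<j + length u]" using occ_eq[OF oc(1)] by simp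
  finally show ?thesis by blast
qed

lemma sw_starts: "(\<And>z. z \<in> set xs \<Longrightarrow> \<exists>r. \<Theta> z @ u = u @ r) \<Longrightarrow> \<exists>r. swd \<Theta> xs @ u = u @ r"
proof (induction xs)
  case Nil then show ?case by simp
next
  case (Cons x xs)
  then obtain r where r: "swd \<Theta> xs @ u = u @ r" by auto
  obtain r' where r': "\<Theta> x @ u = u @ r'" using Cons.prems by auto
  have "swd \<Theta> (x # xs) @ u = u @ r' @ r" using r r' by simp
  then show ?case by blast
qed

lemma ret_key:
  assumes w1: "return_word X u w1" and w2: "return_word X u w2"
    and e: "w1 @ s1 = w2 @ s2" and s1: "s1 @ u = u @ r1" and s2: "s2 @ u = u @ r2"
    and lt: "length w1 < length w2"
  shows False
proof -
  obtain i j where ij: "successive_occ X u i j" "w2 = map X [i..<j]" using w2 unfolding return_word_def by blast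
  then have oc: "occurs_at X u i" "occurs_at X u j" "i < j" "\<And>l. i < l \<Longrightarrow> l < j \<Longrightarrow> \<not> occurs_at X u l"
    unfolding successive_occ_def by auto
  define l where "l = length w1"
  have l0: "0 < l" using ret_nonempty[OF w1] l_def by simp
  have lj: "i + l < j" using lt ij(2) l_def by simp
  have w2u: "w2 @ u = map X [i..<j + length u]"
    using ij(2) occ_eq[OF oc(2)] map_upt_split[of i j "j + length u" X] oc(3) by simp
  have E: "w1 @ u @ r1 = w2 @ u @ r2" using e s1 s2 by (metis append_assoc)
  have "occurs_at X u (i + l)"
    unfolding occurs_at_def
  proof (intro allI impI)
    fix t assume t: "t < length u"
    have "(w1 @ u @ r1) ! (l + t) = u ! t" using t l_def by (simp add: nth_append)
    moreover have "(w2 @ u @ r2) ! (l + t) = (w2 @ u) ! (l + t)"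
    proof -
      have "(w2 @ u @ r2) ! (l + t) = ((w2 @ u) @ r2) ! (l + t)" by simp
      also have "\<dots> = (w2 @ u) ! (l + t)" using t lt l_def by (intro nth_append_left) simp
      finally show ?thesis .
    qed
    moreover have "(w2 @ u) ! (l + t) = X (i + l + t)"
      using w2u t lj by (simp add: add.assoc)
    ultimately show "X (i + l + t) = u ! t" using E by simp
  qed
  then show False using oc(4)[of "i + l"] l0 lj by simp
qed

lemma inj_Tu:
  assumes en: "return_enum X u N \<Theta>"
  shows "set xs \<subseteq> {1..N} \<Longrightarrow> set ys \<subseteq> {1..N} \<Longrightarrow> swd \<Theta> xs = swd \<Theta> ys \<Longrightarrow> xs = ys"
proof (induction xs arbitrary: ys)
  have rw: "\<And>z. z \<in> {1..N} \<Longrightarrow> return_word X u (\<Theta> z)" using enum_ret[OF en] unfolding return_word_def by blast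
  case Nil
  then show ?case using ret_nonempty[OF rw] by (cases ys) auto
next
  have rw: "\<And>z. z \<in> {1..N} \<Longrightarrow> return_word X u (\<Theta> z)" using enum_ret[OF en] unfolding return_word_def by blast
  case (Cons x xs)
  then obtain y ys' where ys: "ys = y # ys'" using ret_nonempty[OF rw] by (cases ys) auto
  have x: "x \<in> {1..N}" and y: "y \<in> {1..N}" using Cons.prems ys by auto
  have e: "\<Theta> x @ swd \<Theta> xs = \<Theta> y @ swd \<Theta> ys'" using Cons.prems ys by simp
  have "\<And>z. z \<in> set xs \<Longrightarrow> \<exists>r. \<Theta> z @ u = u @ r" using Cons.prems(1) rw ret_starts by (meson set_subset_Cons subsetD)
  then obtain r1 where r1: "swd \<Theta> xs @ u = u @ r1" using sw_starts by blast
  have "\<And>z. z \<in> set ys' \<Longrightarrow> \<exists>r. \<Theta> z @ u = u @ r" using Cons.prems(2) ys rw ret_starts by (meson set_subset_Cons subsetD)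
  then obtain r2 where r2: "swd \<Theta> ys' @ u = u @ r2" using sw_starts by blast
  have "\<not> length (\<Theta> x) < length (\<Theta> y)" using ret_key[OF rw[OF x] rw[OF y] e r1 r2] by blast
  moreover have "\<not> length (\<Theta> y) < length (\<Theta> x)" using ret_key[OF rw[OF y] rw[OF x] e[symmetric] r2 r1] by blast
  ultimately have "length (\<Theta> x) = length (\<Theta> y)" by simp
  with e have tx: "\<Theta> x = \<Theta> y" and txs: "swd \<Theta> xs = swd \<Theta> ys'" by auto
  have "inj_on \<Theta> {1..N}" using en unfolding return_enum_def bij_betw_def by blast
  with tx x y have "x = y" by (auto dest: inj_onD)
  moreover have "xs = ys'" using Cons.IH[OF _ _ txs] Cons.prems ys by auto
  ultimately show ?case using ys by simp
qed



lemma rs_step: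
  assumes rs: "return_subst \<tau> X u N \<Theta> \<sigma>"
  shows "set xs \<subseteq> {1..N} \<Longrightarrow> swd \<tau> (swd \<Theta> xs) = swd \<Theta> (swd \<sigma> xs)"
proof -
  assume xs: "set xs \<subseteq> {1..N}"
  have h: "\<forall>i\<in>{1..N}. swd \<Theta> (\<sigma> i) = swd \<tau> (\<Theta> i)"
    using rs unfolding return_subst_def subst_word_eq swd_def by auto
  show ?thesis unfolding sw_comp using xs h by (intro sw_cong) auto
qed

lemma rs_set:
  assumes rs: "return_subst \<tau> X u N \<Theta> \<sigma>"
  shows "\<And>b. b \<in> {1..N} \<Longrightarrow> set (\<sigma> b) \<subseteq> {1..N}"
  using rs unfolding return_subst_def by auto

lemma rs_pow:
  assumes rs: "return_subst \<tau> X u N \<Theta> \<sigma>"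
  shows "set xs \<subseteq> {1..N} \<Longrightarrow> (swpw \<tau> k) (swd \<Theta> xs) = swd \<Theta> ((swpw \<sigma> k) xs)"
proof (induction k)
  case 0 then show ?case by simp
next
  case (Suc k)
  have "set ((swpw \<sigma> k) xs) \<subseteq> {1..N}" using swpow_set[where B="{1..N}" and f=\<sigma>, OF rs_set[OF rs]] Suc.prems by blast
  then show ?case using Suc rs_step[OF rs] by simp
qed

lemma rho_ex:
  assumes sub: "substitution A \<tau> a" and prim: "primitive A \<tau>" and fp: "is_fixed_point A \<tau> a X"
    and u: "u \<noteq> []" "is_prefix_of u X" and v: "v \<noteq> []" "is_prefix_of v X"
    and ru: "return_enum X u Nu \<Theta>u" and rv: "return_enum X v Nv \<Theta>v"
  shows "\<exists>n \<rho>. \<forall>j\<in>{1..Nv}. set (\<rho> j) \<subseteq> {1..Nu} \<and> swd \<Theta>u (\<rho> j) = (swpw \<tau> n) (\<Theta>v j)"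
proof -
  obtain n where n: "\<And>i. occurs_at X v i \<Longrightarrow> occurs_at X u (length ((swpw \<tau> n) (map X [0..<i])))"
    using occ_transfer[OF sub prim fp u v] by blast
  have "\<exists>xs. set xs \<subseteq> {1..Nu} \<and> swd \<Theta>u xs = (swpw \<tau> n) (\<Theta>v j)" if j: "j \<in> {1..Nv}" for j
  proof -
    obtain i k where ik: "successive_occ X v i k" "\<Theta>v j = map X [i..<k]" using enum_ret[OF rv j] by blast
    then have oc: "occurs_at X v i" "occurs_at X v k" "i < k" unfolding successive_occ_def by auto
    define P where "P = length ((swpw \<tau> n) (map X [0..<i]))"
    define Q where "Q = length ((swpw \<tau> n) (map X [0..<k]))"
    have e: "(swpw \<tau> n) (map X [0..<k]) = (swpw \<tau> n) (map X [0..<i]) @ (swpw \<tau> n) (\<Theta>v j)"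
      using map_upt_split[of 0 i k X] oc(3) ik(2) swpow_append by (metis less_imp_le_nat zero_le)
    obtain Q' where Q': "(swpw \<tau> n) (map X [0..<k]) = map X [0..<Q']" using fp_prefix[OF fp] by blast
    have QQ: "Q' = Q" using Q' Q_def by simp
    have PQ: "P \<le> Q" using arg_cong[OF e, of length] P_def Q_def by simp
    have "(swpw \<tau> n) (\<Theta>v j) = drop P ((swpw \<tau> n) (map X [0..<k]))"
      using e P_def by simp
    also have "\<dots> = map X [P..<Q]" using Q' QQ by (simp add: drop_map)
    finally have T: "(swpw \<tau> n) (\<Theta>v j) = map X [P..<Q]" .
    obtain xs where "set xs \<subseteq> {1..Nu}" "swd \<Theta>u xs = map X [P..<Q]"
      using decomp[OF ru PQ] n[OF oc(1)] n[OF oc(2)] P_def Q_def by blast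
    then show ?thesis using T by auto
  qed
  then show ?thesis by metis
qed



definition lapp :: "'b set \<Rightarrow> ('b \<Rightarrow> 'c list) \<Rightarrow> ('b \<Rightarrow> complex) \<Rightarrow> 'c \<Rightarrow> complex" where
  "lapp B f w i = (\<Sum>j\<in>B. of_nat (count_list (f j) i) * w j)"

lemma lapp_comp:
  assumes "finite B" "finite C" "\<And>j. j \<in> B \<Longrightarrow> set (f j) \<subseteq> C"
  shows "lapp B (\<lambda>j. swd g (f j)) w i = lapp C g (lapp B f w) i"
proof -
  have "lapp B (\<lambda>j. swd g (f j)) w i =
      (\<Sum>j\<in>B. \<Sum>k\<in>C. of_nat (count_list (f j) k) * of_nat (count_list (g k) i) * w j)"
    unfolding lapp_def
  proof (intro sum.cong refl)
    fix j assume j: "j \<in> B"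
    have "count_list (swd g (f j)) i = (\<Sum>k\<in>C. count_list (f j) k * count_list (g k) i)"
      by (rule count_sw[OF assms(2) assms(3)[OF j]])
    then show "of_nat (count_list (swd g (f j)) i) * w j =
      (\<Sum>k\<in>C. of_nat (count_list (f j) k) * of_nat (count_list (g k) i) * w j)"
      by (simp add: sum_distrib_right)
  qed
  also have "\<dots> = (\<Sum>k\<in>C. \<Sum>j\<in>B. of_nat (count_list (f j) k) * of_nat (count_list (g k) i) * w j)"
    by (rule sum.swap)
  also have "\<dots> = lapp C g (lapp B f w) i"
    unfolding lapp_def by (simp add: sum_distrib_left mult_ac)
  finally show ?thesis .
qed

lemma lapp_cong: "(\<And>j. j \<in> B \<Longrightarrow> w j = w' j) \<Longrightarrow> lapp B f w i = lapp B f w' i"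
  unfolding lapp_def by simp

lemma lapp_fcong: "(\<And>j. j \<in> B \<Longrightarrow> f j = f' j) \<Longrightarrow> lapp B f w i = lapp B f' w i"
  unfolding lapp_def by simp

lemma lapp_scale: "lapp B f (\<lambda>j. c * w j) i = c * lapp B f w i"
  unfolding lapp_def by (simp add: sum_distrib_left mult_ac)

lemma lapp_zero: "(\<And>j. j \<in> B \<Longrightarrow> w j = 0) \<Longrightarrow> lapp B f w i = 0"
  unfolding lapp_def by simp

lemma lapp_id: "finite B \<Longrightarrow> i \<in> B \<Longrightarrow> lapp B (\<lambda>j. [j]) w i = w i"
proof -
  assume "finite B" "i \<in> B"
  have "lapp B (\<lambda>j. [j]) w i = (\<Sum>j\<in>B. if j = i then w j else 0)"
    unfolding lapp_def by (intro sum.cong refl) auto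
  then show ?thesis using \<open>finite B\<close> \<open>i \<in> B\<close> by simp
qed

lemma eig_iff: "subst_eigenvalue B \<sigma> \<mu> \<longleftrightarrow> (\<exists>w. (\<exists>i\<in>B. w i \<noteq> 0) \<and> (\<forall>i\<in>B. lapp B \<sigma> w i = \<mu> * w i))"
  by (simp add: subst_eigenvalue_def mat_eigenvalue_on_def lapp_def subst_matrix_def)

lemma lapp_pow:
  assumes fin: "finite B" and st: "\<And>j. j \<in> B \<Longrightarrow> set (\<sigma> j) \<subseteq> B"
    and ev: "\<And>i. i \<in> B \<Longrightarrow> lapp B \<sigma> w i = \<mu> * w i"
  shows "i \<in> B \<Longrightarrow> lapp B (\<lambda>j. (swpw \<sigma> k) [j]) w i = \<mu> ^ k * w i"
proof (induction k arbitrary: i)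
  case 0 then show ?case using lapp_id[OF fin] by simp
next
  case (Suc k)
  have s: "set ((swpw \<sigma> k) [j]) \<subseteq> B" if "j \<in> B" for j
    using swpow_set[where B=B and f=\<sigma>, OF st] that by simp
  have "lapp B (\<lambda>j. (swpw \<sigma> (Suc k)) [j]) w i = lapp B (\<lambda>j. swd \<sigma> ((swpw \<sigma> k) [j])) w i"
    by simp
  also have "\<dots> = lapp B \<sigma> (lapp B (\<lambda>j. (swpw \<sigma> k) [j]) w) i"
    by (rule lapp_comp[OF fin fin s])
  also have "\<dots> = lapp B \<sigma> (\<lambda>j. \<mu> ^ k * w j) i"
    by (rule lapp_cong) (rule Suc.IH)
  also have "\<dots> = \<mu> ^ Suc k * w i" using ev[OF Suc.prems] by (simp add: lapp_scale)
  finally show ?case .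
qed



lemma sw_set2: "(\<And>b. b \<in> C \<Longrightarrow> set (f b) \<subseteq> D) \<Longrightarrow> set xs \<subseteq> C \<Longrightarrow> set (swd f xs) \<subseteq> D"
  by (induction xs) auto

lemma incl:
  assumes sub: "substitution A \<tau> a" and prim: "primitive A \<tau>" and fp: "is_fixed_point A \<tau> a X"
    and u: "u \<noteq> []" "is_prefix_of u X" and v: "v \<noteq> []" "is_prefix_of v X"
    and ru: "return_subst \<tau> X u Nu \<Theta>u \<sigma>u" and rv: "return_subst \<tau> X v Nv \<Theta>v \<sigma>v"
    and mu: "\<mu> \<noteq> 0" "subst_eigenvalue {1..Nv} \<sigma>v \<mu>"
  shows "subst_eigenvalue {1..Nu} \<sigma>u \<mu>"
proof -
  have eu: "return_enum X u Nu \<Theta>u" and ev: "return_enum X v Nv \<Theta>v"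
    using ru rv unfolding return_subst_def by auto
  obtain n \<rho> where \<rho>: "\<And>j. j \<in> {1..Nv} \<Longrightarrow> set (\<rho> j) \<subseteq> {1..Nu} \<and> swd \<Theta>u (\<rho> j) = (swpw \<tau> n) (\<Theta>v j)"
    using rho_ex[OF sub prim fp u v eu ev] by blast
  obtain m \<rho>' where \<rho>': "\<And>j. j \<in> {1..Nu} \<Longrightarrow> set (\<rho>' j) \<subseteq> {1..Nv} \<and> swd \<Theta>v (\<rho>' j) = (swpw \<tau> m) (\<Theta>u j)"
    using rho_ex[OF sub prim fp v u ev eu] by blast
  have stu: "\<And>b. b \<in> {1..Nu} \<Longrightarrow> set (\<sigma>u b) \<subseteq> {1..Nu}" by (rule rs_set[OF ru])
  have stv: "\<And>b. b \<in> {1..Nv} \<Longrightarrow> set (\<sigma>v b) \<subseteq> {1..Nv}" by (rule rs_set[OF rv])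
  have Rv: "swd \<Theta>u (swd \<rho> ys) = (swpw \<tau> n) (swd \<Theta>v ys)" if "set ys \<subseteq> {1..Nv}" for ys
    unfolding sw_comp swpow_sw using that \<rho> by (intro sw_cong) auto
  have Ru: "swd \<Theta>v (swd \<rho>' ys) = (swpw \<tau> m) (swd \<Theta>u ys)" if "set ys \<subseteq> {1..Nu}" for ys
    unfolding sw_comp swpow_sw using that \<rho>' by (intro sw_cong) auto
  have setR: "set (swd \<rho> ys) \<subseteq> {1..Nu}" if "set ys \<subseteq> {1..Nv}" for ys
    using that \<rho> by (induction ys) auto
  have E1: "swd \<rho> (\<sigma>v j) = swd \<sigma>u (\<rho> j)" if j: "j \<in> {1..Nv}" for j
  proof (rule inj_Tu[OF eu])
    show "set (swd \<rho> (\<sigma>v j)) \<subseteq> {1..Nu}" using setR stv[OF j] by blast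
    show "set (swd \<sigma>u (\<rho> j)) \<subseteq> {1..Nu}" using sw_set[where B="{1..Nu}" and f=\<sigma>u, OF stu] \<rho>[OF j] by blast
    have "swd \<Theta>u (swd \<rho> (\<sigma>v j)) = (swpw \<tau> n) (swd \<Theta>v (\<sigma>v j))"
      using Rv stv[OF j] by blast
    also have "swd \<Theta>v (\<sigma>v j) = swd \<tau> (\<Theta>v j)"
      using rs_step[OF rv, of "[j]"] j by simp
    also have "(swpw \<tau> n) (swd \<tau> (\<Theta>v j)) = swd \<tau> ((swpw \<tau> n) (\<Theta>v j))"
      by (simp add: funpow_swap1)
    also have "\<dots> = swd \<tau> (swd \<Theta>u (\<rho> j))" using \<rho>[OF j] by simp
    also have "\<dots> = swd \<Theta>u (swd \<sigma>u (\<rho> j))" using rs_step[OF ru] \<rho>[OF j] by blast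
    finally show "swd \<Theta>u (swd \<rho> (\<sigma>v j)) = swd \<Theta>u (swd \<sigma>u (\<rho> j))" .
  qed
  have E2: "swd \<rho>' (\<rho> j) = (swpw \<sigma>v (m + n)) [j]" if j: "j \<in> {1..Nv}" for j
  proof (rule inj_Tu[OF ev])
    show "set (swd \<rho>' (\<rho> j)) \<subseteq> {1..Nv}" using \<rho>[OF j] \<rho>' by (intro sw_set2[of "{1..Nu}"]) auto
    show "set ((swpw \<sigma>v (m + n)) [j]) \<subseteq> {1..Nv}" using swpow_set[where B="{1..Nv}" and f=\<sigma>v, OF stv] j by simp
    have "swd \<Theta>v (swd \<rho>' (\<rho> j)) = (swpw \<tau> m) (swd \<Theta>u (\<rho> j))"
      using Ru \<rho>[OF j] by blast
    also have "\<dots> = (swpw \<tau> m) ((swpw \<tau> n) (\<Theta>v j))" using \<rho>[OF j] by simp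
    also have "\<dots> = (swpw \<tau> (m + n)) (swd \<Theta>v [j])" by (simp add: funpow_add)
    also have "\<dots> = swd \<Theta>v ((swpw \<sigma>v (m + n)) [j])" using rs_pow[OF rv, of "[j]"] j by simp
    finally show "swd \<Theta>v (swd \<rho>' (\<rho> j)) = swd \<Theta>v ((swpw \<sigma>v (m + n)) [j])" .
  qed
  obtain w where w: "\<exists>i\<in>{1..Nv}. w i \<noteq> 0" "\<And>i. i \<in> {1..Nv} \<Longrightarrow> lapp {1..Nv} \<sigma>v w i = \<mu> * w i"
    using mu(2) unfolding eig_iff by blast
  then obtain i0 where i0: "i0 \<in> {1..Nv}" "w i0 \<noteq> 0" by blast
  define w' where "w' = lapp {1..Nv} \<rho> w"
  have setr: "\<And>j. j \<in> {1..Nv} \<Longrightarrow> set (\<rho> j) \<subseteq> {1..Nu}" using \<rho> by blast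
  have setr': "\<And>j. j \<in> {1..Nu} \<Longrightarrow> set (\<rho>' j) \<subseteq> {1..Nv}" using \<rho>' by blast
  have eig: "lapp {1..Nu} \<sigma>u w' i = \<mu> * w' i" for i
  proof -
    have "lapp {1..Nu} \<sigma>u w' i = lapp {1..Nv} (\<lambda>j. swd \<sigma>u (\<rho> j)) w i"
      unfolding w'_def by (rule lapp_comp[OF _ _ setr, symmetric]) auto
    also have "\<dots> = lapp {1..Nv} (\<lambda>j. swd \<rho> (\<sigma>v j)) w i"
      using E1 by (intro lapp_fcong) auto
    also have "\<dots> = lapp {1..Nv} \<rho> (lapp {1..Nv} \<sigma>v w) i"
      by (rule lapp_comp[OF _ _ stv]) auto
    also have "\<dots> = lapp {1..Nv} \<rho> (\<lambda>j. \<mu> * w j) i"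
      using w(2) by (intro lapp_cong) auto
    also have "\<dots> = \<mu> * w' i" unfolding w'_def by (rule lapp_scale)
    finally show ?thesis .
  qed
  have nz: "\<exists>i\<in>{1..Nu}. w' i \<noteq> 0"
  proof (rule ccontr)
    assume "\<not> ?thesis"
    then have z: "\<And>i. i \<in> {1..Nu} \<Longrightarrow> w' i = 0" by blast
    have "lapp {1..Nu} \<rho>' w' i0 = 0" using z by (rule lapp_zero)
    moreover have "lapp {1..Nu} \<rho>' w' i0 = lapp {1..Nv} (\<lambda>j. swd \<rho>' (\<rho> j)) w i0"
      unfolding w'_def by (rule lapp_comp[OF _ _ setr, symmetric]) auto
    moreover have "\<dots> = lapp {1..Nv} (\<lambda>j. (swpw \<sigma>v (m + n)) [j]) w i0"
      using E2 by (intro lapp_fcong) auto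
    moreover have "\<dots> = \<mu> ^ (m + n) * w i0"
      by (rule lapp_pow[OF _ stv w(2) i0(1)]) auto
    ultimately show False using mu(1) i0(2) by simp
  qed
  show ?thesis unfolding eig_iff using nz eig by blast
qed

theorem corollary9:
  fixes \<tau> :: "'a \<Rightarrow> 'a list" and A :: "'a set" and a :: 'a and X :: "nat \<Rightarrow> 'a"
    and u v :: "'a list" and Nu Nv :: nat
    and \<Theta>u \<Theta>v :: "nat \<Rightarrow> 'a list" and \<sigma>u \<sigma>v :: "nat \<Rightarrow> nat list"
  assumes "substitution A \<tau> a" and "primitive A \<tau>" and "is_fixed_point A \<tau> a X"
    and "u \<noteq> []" and "is_prefix_of u X"
    and "v \<noteq> []" and "is_prefix_of v X"
    and "return_subst \<tau> X u Nu \<Theta>u \<sigma>u"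
    and "return_subst \<tau> X v Nv \<Theta>v \<sigma>v"
  shows "{\<mu>. \<mu> \<noteq> 0 \<and> subst_eigenvalue {1..Nu} \<sigma>u \<mu>} = {\<mu>. \<mu> \<noteq> 0 \<and> subst_eigenvalue {1..Nv} \<sigma>v \<mu>}"
  using incl[OF assms(1-3) assms(4,5) assms(6,7) assms(8,9)]
    incl[OF assms(1-3) assms(6,7) assms(4,5) assms(9,8)] by blast

end
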